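(* Let $P$ be the transition matrix of a reversible and ergodic Markov chain on $V=\{1,\dots,N\}$ with stationary distribution $\pi$, and consider any functional-router model for $P$ (any choice of routers $\sigma_v$, $v\in V$) with any initial configuration $\chi^{(0)}$. Then for every $w\in V$, every $T\ge 0$ and every $\gamma$ with $0<\gamma<1/2$, $$\left|\chi^{(T)}_w-\mu^{(T)}_w\right|\le \Psi_\sigma\,\frac{2(1-\gamma)}{1-2\gamma}\,\tau(\gamma)\,\frac{\pi_w}{\pi_{\min}}\,\Delta .$$
   Context: Let $V=\{1,\dots,N\}$ and let $P\in\mathbb{R}_{\ge 0}^{N\times N}$ be a stochastic matrix (entries may be irrational) that is ergodic (irreducible and aperiodic), with unique stationary distribution $\pi$; $\pi_{\min}=\min_{v}\pi_v$. $P$ is reversible if $\pi_uP_{u,v}=\pi_vP_{v,u}$ for all $u,v\in V$. For $v\in V$ let $\mathcal N(v)=\{u\in V: P_{v,u}>0\}$ (which contains $v$ if $P_{v,v}>0$), $\delta(v)=|\mathcal N(v)|$ and $\Delta=\max_v\delta(v)$. The total variation distance is $d_{TV}(\xi,\zeta)=\frac12\|\xi-\zeta\|_1$; the mixing time is $\tau(\varepsilon)=\max_{v\in V}\min\{t\in\mathbb{Z}_{\ge0}: d_{TV}(P^t_{v,\cdot},\pi)\le\varepsilon\}$, where $P^t_{v,\cdot}$ is row $v$ of $P^t$; the mixing rate is $t^*=\tau(1/4)$. A functional-router model consists of functions (routers) $\sigma_v:\mathbb{Z}_{\ge0}\to\mathcal N(v)$ for each $v\in V$. Write $I_{v,u}[z,z')=|\{j\in\{z,\dots,z'-1\}:\sigma_v(j)=u\}|$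 (equal to $0$ if $z'\le z$). Given an initial configuration $\chi^{(0)}\in\mathbb{Z}_{\ge0}^N$ with $\sum_v\chi^{(0)}_v=M$, define recursively $Z^{(t)}_{v,u}=I_{v,u}\big[\sum_{s=0}^{t-1}\chi^{(s)}_v,\ \sum_{s=0}^{t}\chi^{(s)}_v\big)$ and $\chi^{(t+1)}_u=\sum_{v\in V}Z^{(t)}_{v,u}$. Let $\mu^{(0)}=\chi^{(0)}$ and $\mu^{(t)}=\mu^{(0)}P^t$ (row vector times matrix). Define $\Psi_\sigma=\sup_{v\in V,\,u\in\mathcal N(v),\,t\ge0}\big|Z^{(t)}_{v,u}-\chi^{(t)}_vP_{v,u}\big|$. *)

theory Defs
  imports "HOL-Analysis.Analysis"
begin

(* State space V: a finite type 'v (V = UNIV, |V| = N = CARD('v)).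
   Matrices are functions 'v \<Rightarrow> 'v \<Rightarrow> real, distributions/configurations are 'v \<Rightarrow> _ . *)

definition stochastic :: "('v::finite \<Rightarrow> 'v \<Rightarrow> real) \<Rightarrow> bool" where
  "stochastic P \<longleftrightarrow> (\<forall>u v. P u v \<ge> 0) \<and> (\<forall>u. (\<Sum>v\<in>UNIV. P u v) = 1)"

fun matpow :: "('v::finite \<Rightarrow> 'v \<Rightarrow> real) \<Rightarrow> nat \<Rightarrow> 'v \<Rightarrow> 'v \<Rightarrow> real" where
  "matpow P 0 = (\<lambda>u v. if u = v then 1 else 0)"
| "matpow P (Suc t) = (\<lambda>u v. \<Sum>w\<in>UNIV. matpow P t u w * P w v)"

definition irreducible_chain :: "('v::finite \<Rightarrow> 'v \<Rightarrow> real) \<Rightarrow> bool" where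
  "irreducible_chain P \<longleftrightarrow> (\<forall>u v. \<exists>t. matpow P t u v > 0)"

definition aperiodic_chain :: "('v::finite \<Rightarrow> 'v \<Rightarrow> real) \<Rightarrow> bool" where
  "aperiodic_chain P \<longleftrightarrow> (\<forall>v. Gcd {t::nat. t > 0 \<and> matpow P t v v > 0} = 1)"

definition ergodic :: "('v::finite \<Rightarrow> 'v \<Rightarrow> real) \<Rightarrow> bool" where
  "ergodic P \<longleftrightarrow> irreducible_chain P \<and> aperiodic_chain P"

definition stationary_distribution :: "('v::finite \<Rightarrow> 'v \<Rightarrow> real) \<Rightarrow> ('v \<Rightarrow> real) \<Rightarrow> bool" where
  "stationary_distribution P \<pi> \<longleftrightarrow> (\<forall>v. \<pi> v \<ge> 0) \<and> (\<Sum>v\<in>UNIV. \<pi> v) = 1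
      \<and> (\<forall>v. (\<Sum>u\<in>UNIV. \<pi> u * P u v) = \<pi> v)"

definition reversible :: "('v::finite \<Rightarrow> 'v \<Rightarrow> real) \<Rightarrow> ('v \<Rightarrow> real) \<Rightarrow> bool" where
  "reversible P \<pi> \<longleftrightarrow> (\<forall>u v. \<pi> u * P u v = \<pi> v * P v u)"

definition nbhd :: "('v::finite \<Rightarrow> 'v \<Rightarrow> real) \<Rightarrow> 'v \<Rightarrow> 'v set" where
  "nbhd P v = {u. P v u > 0}"

definition max_degree :: "('v::finite \<Rightarrow> 'v \<Rightarrow> real) \<Rightarrow> nat" where
  "max_degree P = Max (range (\<lambda>v. card (nbhd P v)))"

definition pi_min :: "('v::finite \<Rightarrow> real) \<Rightarrow> real" where
  "pi_min \<pi> = Min (range \<pi>)"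

definition dTV :: "('v::finite \<Rightarrow> real) \<Rightarrow> ('v \<Rightarrow> real) \<Rightarrow> real" where
  "dTV \<xi> \<zeta> = (1/2) * (\<Sum>v\<in>UNIV. \<bar>\<xi> v - \<zeta> v\<bar>)"

definition mixing_time :: "('v::finite \<Rightarrow> 'v \<Rightarrow> real) \<Rightarrow> ('v \<Rightarrow> real) \<Rightarrow> real \<Rightarrow> nat" where
  "mixing_time P \<pi> \<epsilon> = Max (range (\<lambda>v. LEAST t. dTV (matpow P t v) \<pi> \<le> \<epsilon>))"

definition Icount :: "('v \<Rightarrow> nat \<Rightarrow> 'v) \<Rightarrow> 'v \<Rightarrow> 'v \<Rightarrow> nat \<Rightarrow> nat \<Rightarrow> nat" where
  "Icount \<sigma> v u z z' = card {j. z \<le> j \<and> j < z' \<and> \<sigma> v j = u}"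

(* router_state \<sigma> \<chi>0 t = (\<chi>^(t), \<lambda>v. \<Sum>_{s<t} \<chi>^(s)_v) *)
fun router_state :: "('v::finite \<Rightarrow> nat \<Rightarrow> 'v) \<Rightarrow> ('v \<Rightarrow> nat) \<Rightarrow> nat \<Rightarrow> ('v \<Rightarrow> nat) \<times> ('v \<Rightarrow> nat)" where
  "router_state \<sigma> \<chi>0 0 = (\<chi>0, (\<lambda>v. 0))"
| "router_state \<sigma> \<chi>0 (Suc t) =
     (let c = fst (router_state \<sigma> \<chi>0 t); S = snd (router_state \<sigma> \<chi>0 t)
      in ((\<lambda>u. \<Sum>v\<in>UNIV. Icount \<sigma> v u (S v) (S v + c v)), (\<lambda>v. S v + c v)))"

definition chi :: "('v::finite \<Rightarrow> nat \<Rightarrow> 'v) \<Rightarrow> ('v \<Rightarrow> nat) \<Rightarrow> nat \<Rightarrow> 'v \<Rightarrow> nat" where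
  "chi \<sigma> \<chi>0 t = fst (router_state \<sigma> \<chi>0 t)"

definition Zflow :: "('v::finite \<Rightarrow> nat \<Rightarrow> 'v) \<Rightarrow> ('v \<Rightarrow> nat) \<Rightarrow> nat \<Rightarrow> 'v \<Rightarrow> 'v \<Rightarrow> nat" where
  "Zflow \<sigma> \<chi>0 t v u = Icount \<sigma> v u (\<Sum>s<t. chi \<sigma> \<chi>0 s v) (\<Sum>s<Suc t. chi \<sigma> \<chi>0 s v)"

definition mu :: "('v::finite \<Rightarrow> 'v \<Rightarrow> real) \<Rightarrow> ('v \<Rightarrow> nat) \<Rightarrow> nat \<Rightarrow> 'v \<Rightarrow> real" where
  "mu P \<chi>0 t w = (\<Sum>v\<in>UNIV. real (\<chi>0 v) * matpow P t v w)"

(* \<Psi>_\<sigma>, as an extended real (the supremum may be +\<infinity>) *)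
definition Psi :: "('v::finite \<Rightarrow> 'v \<Rightarrow> real) \<Rightarrow> ('v \<Rightarrow> nat \<Rightarrow> 'v) \<Rightarrow> ('v \<Rightarrow> nat) \<Rightarrow> ereal" where
  "Psi P \<sigma> \<chi>0 = (SUP (v, u, t) \<in> {(v, u, t). u \<in> nbhd P v}.
      ereal \<bar>real (Zflow \<sigma> \<chi>0 t v u) - real (chi \<sigma> \<chi>0 t v) * P v u\<bar>)"

end

theory Submission
  imports Defs
begin


lemma matpow_nonneg:
  assumes "stochastic P" shows "matpow P t u v \<ge> 0"
proof (induction t arbitrary: v)
  case 0 then show ?case by simp
next
  case (Suc t)
  have "\<forall>u v. P u v \<ge> 0" using assms unfolding stochastic_def by auto
  then show ?case using Suc by (auto intro!: sum_nonneg)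
qed

lemma matpow_add:
  "matpow P (a + b) u v = (\<Sum>w\<in>UNIV. matpow P a u w * matpow P b w v)"
proof (induction b arbitrary: v)
  case 0
  have "(\<Sum>w\<in>UNIV. matpow P a u w * (if w = v then 1 else 0)) = matpow P a u v"
    by (simp add: if_distrib cong: if_cong)
  then show ?case by simp
next
  case (Suc b)
  have "matpow P (a + Suc b) u v = (\<Sum>x\<in>UNIV. matpow P (a+b) u x * P x v)" by simp
  also have "\<dots> = (\<Sum>x\<in>UNIV. (\<Sum>w\<in>UNIV. matpow P a u w * matpow P b w x) * P x v)"
    using Suc by simp
  also have "\<dots> = (\<Sum>x\<in>UNIV. \<Sum>w\<in>UNIV. matpow P a u w * (matpow P b w x * P x v))"
    by (simp add: sum_distrib_right mult.assoc)
  also have "\<dots> = (\<Sum>w\<in>UNIV. \<Sum>x\<in>UNIV. matpow P a u w * (matpow P b w x * P x v))"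
    by (rule sum.swap)
  also have "\<dots> = (\<Sum>w\<in>UNIV. matpow P a u w * matpow P (Suc b) w v)"
    by (simp add: sum_distrib_left)
  finally show ?case .
qed

lemma matpow_one: "matpow P 1 u v = P u v"
proof -
  have "matpow P 1 u v = (\<Sum>w\<in>UNIV. (if u = w then 1 else 0) * P w v)" by simp
  also have "\<dots> = (\<Sum>w\<in>UNIV. if w = u then P w v else 0)" by (rule sum.cong) auto
  finally show ?thesis by simp
qed

lemma matpow_Suc_left: "matpow P (Suc t) u v = (\<Sum>w\<in>UNIV. P u w * matpow P t w v)"
proof -
  have "matpow P (Suc t) u v = matpow P (1 + t) u v" by simp
  also have "\<dots> = (\<Sum>w\<in>UNIV. P u w * matpow P t w v)" by (simp only: matpow_add matpow_one)
  finally show ?thesis .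
qed

lemma matpow_row_sum:
  assumes "stochastic P" shows "(\<Sum>v\<in>UNIV. matpow P t u v) = 1"
proof (induction t arbitrary: u)
  case 0 then show ?case by simp
next
  case (Suc t)
  have "(\<Sum>v\<in>UNIV. matpow P (Suc t) u v) = (\<Sum>v\<in>UNIV. \<Sum>w\<in>UNIV. matpow P t u w * P w v)"
    by simp
  also have "\<dots> = (\<Sum>w\<in>UNIV. \<Sum>v\<in>UNIV. matpow P t u w * P w v)" by (rule sum.swap)
  also have "\<dots> = (\<Sum>w\<in>UNIV. matpow P t u w * (\<Sum>v\<in>UNIV. P w v))" by (simp add: sum_distrib_left)
  also have "\<dots> = 1" using Suc assms unfolding stochastic_def by simp
  finally show ?case .
qed

lemma stationary_pow:
  assumes "stationary_distribution P \<pi>" shows "(\<Sum>u\<in>UNIV. \<pi> u * matpow P t u v) = \<pi> v"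
proof (induction t arbitrary: v)
  case 0 then show ?case by (simp add: if_distrib cong: if_cong)
next
  case (Suc t)
  have "(\<Sum>u\<in>UNIV. \<pi> u * matpow P (Suc t) u v) = (\<Sum>w\<in>UNIV. (\<Sum>u\<in>UNIV. \<pi> u * matpow P t u w) * P w v)"
    by (simp add: sum_distrib_left sum_distrib_right mult.assoc) (rule sum.swap)
  also have "\<dots> = \<pi> v" using Suc assms unfolding stationary_distribution_def by simp
  finally show ?case .
qed

lemma reversible_pow:
  assumes "reversible P \<pi>" shows "\<pi> u * matpow P t u w = \<pi> w * matpow P t w u"
proof (induction t arbitrary: u w)
  case 0 then show ?case by auto
next
  case (Suc t)
  have "\<pi> u * matpow P (Suc t) u w = (\<Sum>x\<in>UNIV. (\<pi> u * matpow P t u x) * P x w)"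
    by (simp add: sum_distrib_left mult.assoc)
  also have "\<dots> = (\<Sum>x\<in>UNIV. matpow P t x u * (\<pi> x * P x w))"
    using Suc by (simp add: mult_ac)
  also have "\<dots> = (\<Sum>x\<in>UNIV. matpow P t x u * (\<pi> w * P w x))"
    using assms unfolding reversible_def by simp
  also have "\<dots> = \<pi> w * (\<Sum>x\<in>UNIV. P w x * matpow P t x u)"
    by (simp add: sum_distrib_left mult_ac)
  also have "\<dots> = \<pi> w * matpow P (Suc t) w u"
    by (simp only: matpow_Suc_left)
  finally show ?case .
qed

lemma pi_pos:
  assumes "stationary_distribution P \<pi>" "irreducible_chain P" "stochastic P"
  shows "\<pi> v > 0"
proof -
  have nn: "\<forall>v. \<pi> v \<ge> 0" and s1: "(\<Sum>v\<in>UNIV. \<pi> v) = 1"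
    using assms(1) unfolding stationary_distribution_def by auto
  have "\<exists>u. \<pi> u > 0"
  proof (rule ccontr)
    assume "\<not> (\<exists>u. \<pi> u > 0)"
    then have "\<forall>u. \<pi> u = 0" using nn by (meson linorder_not_le order_antisym)
    with s1 show False by simp
  qed
  then obtain u where u: "\<pi> u > 0" by blast
  obtain t where t: "matpow P t u v > 0" using assms(2) unfolding irreducible_chain_def by blast
  have "\<pi> u * matpow P t u v \<le> (\<Sum>x\<in>UNIV. \<pi> x * matpow P t x v)"
    by (rule member_le_sum) (use nn matpow_nonneg[OF assms(3)] in auto)
  also have "\<dots> = \<pi> v" by (rule stationary_pow[OF assms(1)])
  finally show ?thesis using u t by (smt (verit) mult_pos_pos)
qed



lemma semigroup_large:
  fixes S :: "nat set"
  assumes add: "\<And>a b. a \<in> S \<Longrightarrow> b \<in> S \<Longrightarrow> a + b \<in> S"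
    and pos: "\<And>a. a \<in> S \<Longrightarrow> a > 0" and g: "Gcd S = 1"
  shows "\<exists>n0. \<forall>n\<ge>n0. n \<in> S"
proof -
  define S0 where "S0 = insert 0 S"
  have add0: "a \<in> S0 \<Longrightarrow> b \<in> S0 \<Longrightarrow> a + b \<in> S0" for a b
    unfolding S0_def using add by auto
  have mult0: "x \<in> S0 \<Longrightarrow> k * x \<in> S0" for k x
    by (induction k) (auto simp: S0_def[symmetric] add0, simp add: S0_def)
  have toS: "x \<in> S0 \<Longrightarrow> x > 0 \<Longrightarrow> x \<in> S" for x unfolding S0_def by auto
  have "S \<noteq> {}" using g by auto
  then obtain s0 where s0: "s0 \<in> S" by blast
  define D where "D = {d. d > 0 \<and> (\<exists>a\<in>S0. \<exists>b\<in>S0. a = b + d)}"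
  have "s0 \<in> D" unfolding D_def S0_def using s0 pos[OF s0] by auto
  define d where "d = (LEAST d. d \<in> D)"
  have dD: "d \<in> D" unfolding d_def by (rule LeastI) fact
  then obtain a b where ab: "a \<in> S0" "b \<in> S0" "a = b + d" and dpos: "d > 0" unfolding D_def by auto
  have "d dvd s" if s: "s \<in> S" for s
  proof (rule ccontr)
    assume nd: "\<not> d dvd s"
    define q where "q = s div d"
    define r where "r = s mod d"
    have sqr: "s = q * d + r" unfolding q_def r_def by simp
    have rpos: "r > 0" using nd unfolding r_def by (simp add: dvd_eq_mod_eq_0)
    have rlt: "r < d" unfolding r_def using dpos by simp
    have "s \<in> S0" using s unfolding S0_def by simp
    then have "s + q * b \<in> S0" using add0 mult0[OF ab(2)] by blast
    moreover have "q * a \<in> S0" by (rule mult0[OF ab(1)])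
    moreover have "s + q * b = q * a + r" using sqr ab(3) by (simp add: algebra_simps)
    ultimately have "r \<in> D" unfolding D_def using rpos by blast
    then have "d \<le> r" unfolding d_def by (rule Least_le)
    with rlt show False by simp
  qed
  then have "d dvd Gcd S" by (rule Gcd_greatest)
  then have d1: "d = 1" using g by simp
  show ?thesis
  proof (cases "b = 0")
    case True
    then have a1: "a = 1" using ab d1 by simp
    have "n \<in> S" if "n \<ge> 1" for n
      using mult0[OF ab(1), of n] a1 that toS by auto
    then show ?thesis by blast
  next
    case False
    have "n \<in> S" if n: "n \<ge> b * b + 1" for n
    proof -
      define q where "q = n div b"
      define r where "r = n mod b"
      have nqr: "n = q * b + r" unfolding q_def r_def by simp
      have rlt: "r < b" unfolding r_def using False by simp
      have "b * b \<le> n" using n by simp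
      then have "b \<le> q" unfolding q_def using False
        by (metis div_le_mono nonzero_mult_div_cancel_right)
      then have rq: "r \<le> q" using rlt by simp
      have "n = (q - r) * b + r * a" using nqr ab(3) d1 rq by (simp add: algebra_simps)
      moreover have "(q - r) * b + r * a \<in> S0" by (intro add0 mult0 ab)
      ultimately have "n \<in> S0" by simp
      moreover have "n > 0" using n by simp
      ultimately show ?thesis by (rule toS)
    qed
    then show ?thesis by blast
  qed
qed

lemma pos_mult:
  assumes st: "stochastic P" and "matpow P a u x > 0" "matpow P b x v > 0"
  shows "matpow P (a+b) u v > 0"
proof -
  have "matpow P a u x * matpow P b x v \<le> (\<Sum>y\<in>UNIV. matpow P a u y * matpow P b y v)"
    by (rule member_le_sum) (use matpow_nonneg[OF st] in auto)
  then show ?thesis unfolding matpow_add using assms(2,3) by (smt (verit) mult_pos_pos)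
qed

lemma primitive:
  assumes st: "stochastic P" and erg: "ergodic P"
  shows "\<exists>r. \<forall>x y. matpow P r x y > 0"
proof -
  have large: "\<exists>n0. \<forall>n\<ge>n0. matpow P n v v > 0" for v
  proof -
    have "\<exists>n0. \<forall>n\<ge>n0. n \<in> {t. t > 0 \<and> matpow P t v v > 0}"
    proof (rule semigroup_large)
      show "Gcd {t. t > 0 \<and> matpow P t v v > 0} = 1"
        using erg unfolding ergodic_def aperiodic_chain_def by simp
    qed (auto intro: pos_mult[OF st])
    then show ?thesis by auto
  qed
  then obtain n0 where n0: "\<And>v n. n \<ge> n0 v \<Longrightarrow> matpow P n v v > 0" by metis
  have "\<forall>u v. \<exists>t. matpow P t u v > 0" using erg unfolding ergodic_def irreducible_chain_def by simp
  then obtain l where l: "\<And>u v. matpow P (l u v) u v > 0" by metis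
  define r where "r = (\<Sum>u\<in>UNIV. \<Sum>v\<in>UNIV. l u v) + (\<Sum>v\<in>UNIV. n0 v)"
  have "matpow P r x y > 0" for x y
  proof -
    have "l x y \<le> (\<Sum>v\<in>UNIV. l x v)" by (rule member_le_sum) auto
    also have "\<dots> \<le> (\<Sum>u\<in>UNIV. \<Sum>v\<in>UNIV. l u v)" by (rule member_le_sum) auto
    finally have l1: "l x y \<le> (\<Sum>u\<in>UNIV. \<Sum>v\<in>UNIV. l u v)" .
    have n1: "n0 y \<le> (\<Sum>v\<in>UNIV. n0 v)" by (rule member_le_sum) auto
    have "r = l x y + (r - l x y)" using l1 unfolding r_def by simp
    moreover have "matpow P (r - l x y) y y > 0" by (rule n0) (use l1 n1 in \<open>simp add: r_def\<close>)
    ultimately show ?thesis using pos_mult[OF st l[of x y]] by metis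
  qed
  then show ?thesis by blast
qed



lemma contract:
  fixes Q :: "'v::finite \<Rightarrow> 'v \<Rightarrow> real" and \<eta> :: "'v \<Rightarrow> real"
  assumes Qc: "\<And>x y. (\<Sum>z\<in>UNIV. \<bar>Q x z - Q y z\<bar>) \<le> 2*c" and s0: "(\<Sum>x\<in>UNIV. \<eta> x) = 0"
  shows "(\<Sum>z\<in>UNIV. \<bar>\<Sum>x\<in>UNIV. \<eta> x * Q x z\<bar>) \<le> c * (\<Sum>x\<in>UNIV. \<bar>\<eta> x\<bar>)"
proof -
  define p where "p x = max (\<eta> x) 0" for x
  define n where "n x = max (- \<eta> x) 0" for x
  have eta: "\<eta> x = p x - n x" for x unfolding p_def n_def by auto
  have abseta: "\<bar>\<eta> x\<bar> = p x + n x" for x unfolding p_def n_def by auto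
  have pn: "p x \<ge> 0" "n x \<ge> 0" for x unfolding p_def n_def by auto
  define m where "m = (\<Sum>x\<in>UNIV. p x)"
  have mn: "(\<Sum>x\<in>UNIV. n x) = m"
    using s0 unfolding m_def eta by (simp add: sum_subtractf)
  have sabs: "(\<Sum>x\<in>UNIV. \<bar>\<eta> x\<bar>) = 2 * m"
    unfolding abseta by (simp add: sum.distrib mn m_def)
  have m0: "m \<ge> 0" unfolding m_def by (simp add: sum_nonneg pn)
  show ?thesis
  proof (cases "m = 0")
    case True
    then have "\<forall>x. p x = 0" using pn unfolding m_def
      by (simp add: sum_nonneg_eq_0_iff)
    moreover have "\<forall>x. n x = 0" using pn True mn
      by (simp add: sum_nonneg_eq_0_iff)
    ultimately have "\<forall>x. \<eta> x = 0" using eta by simp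
    then show ?thesis by simp
  next
    case False
    then have mpos: "m > 0" using m0 by simp
    have key: "(\<Sum>x\<in>UNIV. \<eta> x * Q x z) =
        (\<Sum>x\<in>UNIV. \<Sum>y\<in>UNIV. p x * n y * (Q x z - Q y z)) / m" for z
    proof -
      have "(\<Sum>x\<in>UNIV. \<Sum>y\<in>UNIV. p x * n y * (Q x z - Q y z))
          = (\<Sum>x\<in>UNIV. \<Sum>y\<in>UNIV. (p x * Q x z) * n y) - (\<Sum>x\<in>UNIV. \<Sum>y\<in>UNIV. p x * (n y * Q y z))"
        by (simp only: sum_subtractf[symmetric] right_diff_distrib mult_ac)
      also have "\<dots> = (\<Sum>x\<in>UNIV. p x * Q x z) * (\<Sum>y\<in>UNIV. n y) - (\<Sum>x\<in>UNIV. p x) * (\<Sum>y\<in>UNIV. n y * Q y z)"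
        by (simp add: sum_product)
      also have "\<dots> = m * (\<Sum>x\<in>UNIV. \<eta> x * Q x z)"
        by (simp only: mn m_def[symmetric] eta left_diff_distrib sum_subtractf mult_ac right_diff_distrib)
      finally show ?thesis using mpos by simp
    qed
    have "(\<Sum>z\<in>UNIV. \<bar>\<Sum>x\<in>UNIV. \<eta> x * Q x z\<bar>)
        \<le> (\<Sum>z\<in>UNIV. (\<Sum>x\<in>UNIV. \<Sum>y\<in>UNIV. p x * n y * \<bar>Q x z - Q y z\<bar>) / m)"
    proof (rule sum_mono)
      fix z
      let ?X = "(\<Sum>x\<in>UNIV. \<Sum>y\<in>UNIV. p x * n y * (Q x z - Q y z))"
      let ?Y = "(\<Sum>x\<in>UNIV. \<Sum>y\<in>UNIV. p x * n y * \<bar>Q x z - Q y z\<bar>)"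
      have "\<bar>?X\<bar> \<le> (\<Sum>x\<in>UNIV. \<bar>\<Sum>y\<in>UNIV. p x * n y * (Q x z - Q y z)\<bar>)"
        by (rule sum_abs)
      also have "\<dots> \<le> (\<Sum>x\<in>UNIV. \<Sum>y\<in>UNIV. \<bar>p x * n y * (Q x z - Q y z)\<bar>)"
        by (rule sum_mono, rule sum_abs)
      also have "\<dots> = ?Y"
        by (intro sum.cong refl) (simp add: abs_mult pn)
      finally have XY: "\<bar>?X\<bar> \<le> ?Y" .
      have "\<bar>?X / m\<bar> = \<bar>?X\<bar> / m" using mpos by simp
      also have "\<dots> \<le> ?Y / m" using XY mpos by (simp add: divide_right_mono)
      finally show "\<bar>\<Sum>x\<in>UNIV. \<eta> x * Q x z\<bar> \<le> ?Y / m"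
        by (simp only: key)
    qed
    also have "\<dots> = (\<Sum>x\<in>UNIV. \<Sum>y\<in>UNIV. p x * n y * (\<Sum>z\<in>UNIV. \<bar>Q x z - Q y z\<bar>)) / m"
    proof -
      have "(\<Sum>z\<in>UNIV. \<Sum>x\<in>UNIV. \<Sum>y\<in>UNIV. p x * n y * \<bar>Q x z - Q y z\<bar>)
          = (\<Sum>x\<in>UNIV. \<Sum>z\<in>UNIV. \<Sum>y\<in>UNIV. p x * n y * \<bar>Q x z - Q y z\<bar>)" by (rule sum.swap)
      also have "\<dots> = (\<Sum>x\<in>UNIV. \<Sum>y\<in>UNIV. \<Sum>z\<in>UNIV. p x * n y * \<bar>Q x z - Q y z\<bar>)"
        by (rule sum.cong[OF refl], rule sum.swap)
      also have "\<dots> = (\<Sum>x\<in>UNIV. \<Sum>y\<in>UNIV. p x * n y * (\<Sum>z\<in>UNIV. \<bar>Q x z - Q y z\<bar>))"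
        by (simp only: sum_distrib_left)
      finally have E: "(\<Sum>z\<in>UNIV. \<Sum>x\<in>UNIV. \<Sum>y\<in>UNIV. p x * n y * \<bar>Q x z - Q y z\<bar>)
          = (\<Sum>x\<in>UNIV. \<Sum>y\<in>UNIV. p x * n y * (\<Sum>z\<in>UNIV. \<bar>Q x z - Q y z\<bar>))" .
      show ?thesis by (simp only: sum_divide_distrib[symmetric] E)
    qed
    also have "\<dots> \<le> (\<Sum>x\<in>UNIV. \<Sum>y\<in>UNIV. p x * n y * (2*c)) / m"
      using mpos pn Qc by (intro divide_right_mono sum_mono mult_left_mono) auto
    also have "\<dots> = (2*c) * ((\<Sum>x\<in>UNIV. p x) * (\<Sum>y\<in>UNIV. n y)) / m"
      by (simp only: sum_product sum_distrib_left mult_ac)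
    also have "\<dots> = c * (2*m)" using mpos by (simp add: mn m_def[symmetric])
    finally show ?thesis using sabs by simp
  qed
qed



definition Dist :: "('v::finite \<Rightarrow> 'v \<Rightarrow> real) \<Rightarrow> ('v \<Rightarrow> real) \<Rightarrow> nat \<Rightarrow> 'v \<Rightarrow> real" where
  "Dist P \<pi> t v = (\<Sum>u\<in>UNIV. \<bar>matpow P t v u - \<pi> u\<bar>)"

lemma sum_lessThan_add: "(\<Sum>t<a+(b::nat). f t) = (\<Sum>t<a. f t) + (\<Sum>i<b. f (a+i))"
  by (induction b) (simp_all add: add.assoc)

lemma sum_reflect: "(\<Sum>s<T. f (T - Suc s)) = (\<Sum>t<T. f t)"
proof (induction T)
  case 0 then show ?case by simp
next
  case (Suc T)
  have "(\<Sum>s<Suc T. f (Suc T - Suc s)) = f T + (\<Sum>s<T. f (T - Suc s))"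
    by (simp only: sum.lessThan_Suc_shift) simp
  then show ?case using Suc by (simp add: add.commute)
qed

lemma Dist_step:
  assumes st: "stochastic P" and sd: "stationary_distribution P \<pi>"
    and c: "\<And>x y. (\<Sum>z\<in>UNIV. \<bar>matpow P s x z - matpow P s y z\<bar>) \<le> 2*c"
  shows "Dist P \<pi> (t+s) v \<le> c * Dist P \<pi> t v"
proof -
  define \<eta> where "\<eta> x = matpow P t v x - \<pi> x" for x
  have s1: "(\<Sum>x\<in>UNIV. \<pi> x) = 1" using sd unfolding stationary_distribution_def by simp
  have s0: "(\<Sum>x\<in>UNIV. \<eta> x) = 0"
    unfolding \<eta>_def by (simp add: sum_subtractf matpow_row_sum[OF st] s1)
  have e: "(\<Sum>x\<in>UNIV. \<eta> x * matpow P s x z) = matpow P (t+s) v z - \<pi> z" for z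
    unfolding \<eta>_def by (simp add: left_diff_distrib sum_subtractf matpow_add stationary_pow[OF sd])
  have "(\<Sum>z\<in>UNIV. \<bar>\<Sum>x\<in>UNIV. \<eta> x * matpow P s x z\<bar>) \<le> c * (\<Sum>x\<in>UNIV. \<bar>\<eta> x\<bar>)"
    by (rule contract[OF c s0])
  then have "(\<Sum>z\<in>UNIV. \<bar>matpow P (t+s) v z - \<pi> z\<bar>) \<le> c * (\<Sum>x\<in>UNIV. \<bar>\<eta> x\<bar>)"
    by (simp only: e)
  then show ?thesis unfolding Dist_def \<eta>_def .
qed

lemma row_diff_le2:
  assumes st: "stochastic P"
  shows "(\<Sum>z\<in>UNIV. \<bar>matpow P s x z - matpow P s y z\<bar>) \<le> 2*1"
proof -
  have "(\<Sum>z\<in>UNIV. \<bar>matpow P s x z - matpow P s y z\<bar>) \<le> (\<Sum>z\<in>UNIV. matpow P s x z + matpow P s y z)"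
    by (rule sum_mono) (use matpow_nonneg[OF st] in \<open>simp add: abs_le_iff\<close>)
  also have "\<dots> = 2" by (simp add: sum.distrib matpow_row_sum[OF st])
  finally show ?thesis by simp
qed

lemma Dist_mono:
  assumes st: "stochastic P" and sd: "stationary_distribution P \<pi>" and "t \<le> t'"
  shows "Dist P \<pi> t' v \<le> Dist P \<pi> t v"
  using assms(3)
proof (induction t' rule: dec_induct)
  case base then show ?case by simp
next
  case (step n)
  have "Dist P \<pi> (n+1) v \<le> 1 * Dist P \<pi> n v"
    by (rule Dist_step[OF st sd row_diff_le2[OF st]])
  then show ?case using step by simp
qed

lemma Dist_nonneg: "Dist P \<pi> t v \<ge> 0" unfolding Dist_def by (simp add: sum_nonneg)

lemma Dist_le2:
  assumes st: "stochastic P" and sd: "stationary_distribution P \<pi>"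
  shows "Dist P \<pi> t v \<le> 2"
proof -
  have nn: "\<forall>v. \<pi> v \<ge> 0" and s1: "(\<Sum>v\<in>UNIV. \<pi> v) = 1"
    using sd unfolding stationary_distribution_def by auto
  have "Dist P \<pi> t v \<le> (\<Sum>u\<in>UNIV. matpow P t v u + \<pi> u)" unfolding Dist_def
    by (rule sum_mono) (use matpow_nonneg[OF st] nn in \<open>simp add: abs_le_iff\<close>)
  also have "\<dots> = 2" by (simp add: sum.distrib matpow_row_sum[OF st] s1)
  finally show ?thesis .
qed



lemma mixing_exists:
  assumes st: "stochastic P" and erg: "ergodic P" and sd: "stationary_distribution P \<pi>" and g: "\<gamma> > 0"
  shows "\<exists>t. Dist P \<pi> t v \<le> 2*\<gamma>"
proof -
  obtain r where r: "\<And>x y. matpow P r x y > 0" using primitive[OF st erg] by blast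
  define Q where "Q = matpow P r"
  define z0 :: 'a where "z0 = undefined"
  define \<epsilon> where "\<epsilon> = Min (range (\<lambda>x. Q x z0))"
  have "\<epsilon> \<in> range (\<lambda>x. Q x z0)" unfolding \<epsilon>_def by (rule Min_in) auto
  then have epos: "\<epsilon> > 0" using r unfolding Q_def by auto
  have ele: "\<epsilon> \<le> Q x z0" for x unfolding \<epsilon>_def by (rule Min_le) auto
  have Qnn: "Q x z \<ge> 0" for x z unfolding Q_def by (rule matpow_nonneg[OF st])
  have Qrow: "(\<Sum>z\<in>UNIV. Q x z) = 1" for x unfolding Q_def by (rule matpow_row_sum[OF st])
  have c: "(\<Sum>z\<in>UNIV. \<bar>Q x z - Q y z\<bar>) \<le> 2*(1-\<epsilon>)" for x y
  proof -
    have ab: "\<bar>Q x z - Q y z\<bar> = Q x z + Q y z - 2 * min (Q x z) (Q y z)" for z by auto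
    have "min (Q x z0) (Q y z0) \<le> (\<Sum>z\<in>UNIV. min (Q x z) (Q y z))"
      by (rule member_le_sum) (use Qnn in auto)
    moreover have "\<epsilon> \<le> min (Q x z0) (Q y z0)" using ele by simp
    ultimately have m: "\<epsilon> \<le> (\<Sum>z\<in>UNIV. min (Q x z) (Q y z))" by linarith
    have "(\<Sum>z\<in>UNIV. \<bar>Q x z - Q y z\<bar>) = (\<Sum>z\<in>UNIV. Q x z) + (\<Sum>z\<in>UNIV. Q y z) - 2 * (\<Sum>z\<in>UNIV. min (Q x z) (Q y z))"
      unfolding ab by (simp add: sum.distrib sum_subtractf sum_distrib_left)
    then show ?thesis using m Qrow by simp
  qed
  have c0: "1 - \<epsilon> \<ge> 0"
  proof -
    have "0 \<le> (\<Sum>z\<in>UNIV. \<bar>Q z0 z - Q z0 z\<bar>)" by simp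
    then show ?thesis using c[of z0 z0] by simp
  qed
  have bound: "Dist P \<pi> (k*r) v \<le> 2 * (1-\<epsilon>)^k" for k
  proof (induction k)
    case 0 then show ?case using Dist_le2[OF st sd] by simp
  next
    case (Suc k)
    have "Dist P \<pi> (k*r + r) v \<le> (1-\<epsilon>) * Dist P \<pi> (k*r) v"
      by (rule Dist_step[OF st sd]) (use c in \<open>simp add: Q_def\<close>)
    also have "\<dots> \<le> (1-\<epsilon>) * (2 * (1-\<epsilon>)^k)" by (rule mult_left_mono[OF Suc c0])
    finally show ?case by (simp add: add.commute mult_ac)
  qed
  obtain k where "(1-\<epsilon>)^k < \<gamma>" using real_arch_pow_inv[OF g, of "1-\<epsilon>"] epos by auto
  then have "Dist P \<pi> (k*r) v \<le> 2*\<gamma>" using bound[of k] by simp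
  then show ?thesis by blast
qed



lemma dTV_Dist: "dTV (matpow P t v) \<pi> = Dist P \<pi> t v / 2"
  unfolding dTV_def Dist_def by simp

context
  fixes P :: "'v::finite \<Rightarrow> 'v \<Rightarrow> real" and \<pi> :: "'v \<Rightarrow> real" and \<gamma> :: real
  assumes st: "stochastic P" and erg: "ergodic P" and sd: "stationary_distribution P \<pi>"
    and g0: "0 < \<gamma>" and g1: "\<gamma> < 1/2"
begin

lemma mix_tau: "Dist P \<pi> (mixing_time P \<pi> \<gamma>) v \<le> 2*\<gamma>"
proof -
  define tv where "tv = (LEAST t. dTV (matpow P t v) \<pi> \<le> \<gamma>)"
  obtain t0 where "Dist P \<pi> t0 v \<le> 2*\<gamma>" using mixing_exists[OF st erg sd g0] by blast
  then have ex: "\<exists>t. dTV (matpow P t v) \<pi> \<le> \<gamma>" by (intro exI[of _ t0]) (simp add: dTV_Dist)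
  have "dTV (matpow P tv v) \<pi> \<le> \<gamma>" unfolding tv_def by (rule LeastI_ex[OF ex])
  then have a: "Dist P \<pi> tv v \<le> 2*\<gamma>" by (simp add: dTV_Dist)
  have "tv \<le> mixing_time P \<pi> \<gamma>" unfolding mixing_time_def tv_def
    by (rule Max_ge) auto
  then have "Dist P \<pi> (mixing_time P \<pi> \<gamma>) v \<le> Dist P \<pi> tv v" by (rule Dist_mono[OF st sd])
  with a show ?thesis by simp
qed

lemma contr_tau: "Dist P \<pi> (t + mixing_time P \<pi> \<gamma>) v \<le> (2*\<gamma>) * Dist P \<pi> t v"
proof (rule Dist_step[OF st sd])
  fix x y
  let ?m = "mixing_time P \<pi> \<gamma>"
  have "(\<Sum>z\<in>UNIV. \<bar>matpow P ?m x z - matpow P ?m y z\<bar>)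
     \<le> (\<Sum>z\<in>UNIV. \<bar>matpow P ?m x z - \<pi> z\<bar> + \<bar>matpow P ?m y z - \<pi> z\<bar>)"
    by (rule sum_mono) simp
  also have "\<dots> = Dist P \<pi> ?m x + Dist P \<pi> ?m y" unfolding Dist_def by (simp add: sum.distrib)
  also have "\<dots> \<le> 2 * (2*\<gamma>)" using mix_tau[of x] mix_tau[of y] by simp
  finally show "(\<Sum>z\<in>UNIV. \<bar>matpow P ?m x z - matpow P ?m y z\<bar>) \<le> 2 * (2*\<gamma>)" .
qed

lemma decay: "(Suc K) * mixing_time P \<pi> \<gamma> \<le> t \<Longrightarrow> Dist P \<pi> t v \<le> 2*\<gamma>*(2*\<gamma>)^K"
proof (induction K arbitrary: t)
  case 0
  then have "Dist P \<pi> t v \<le> Dist P \<pi> (mixing_time P \<pi> \<gamma>) v" by (intro Dist_mono[OF st sd]) simp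
  then show ?case using mix_tau[of v] by simp
next
  case (Suc K)
  let ?m = "mixing_time P \<pi> \<gamma>"
  have tt: "t = (t - ?m) + ?m" using Suc.prems by simp
  have "Suc K * ?m \<le> t - ?m" using Suc.prems by simp
  then have ih: "Dist P \<pi> (t - ?m) v \<le> 2*\<gamma>*(2*\<gamma>)^K" by (rule Suc.IH)
  have "Dist P \<pi> t v \<le> (2*\<gamma>) * Dist P \<pi> (t - ?m) v" using contr_tau[of "t - ?m" v] tt by simp
  also have "\<dots> \<le> (2*\<gamma>) * (2*\<gamma>*(2*\<gamma>)^K)" by (rule mult_left_mono[OF ih]) (use g0 in simp)
  finally show ?case by (simp add: mult_ac)
qed

lemma sum_Dist_bound:
  "(\<Sum>t<T. Dist P \<pi> t v) \<le> 2 * real (mixing_time P \<pi> \<gamma>) * (1-\<gamma>) / (1 - 2*\<gamma>)"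
proof (cases "mixing_time P \<pi> \<gamma> = 0")
  case True
  have "Dist P \<pi> t v \<le> 0" for t
  proof (rule ccontr)
    assume "\<not> Dist P \<pi> t v \<le> 0"
    then have D: "Dist P \<pi> t v > 0" by simp
    obtain K where K: "(2*\<gamma>)^K < Dist P \<pi> t v / (2*\<gamma>)"
      using real_arch_pow_inv[of "Dist P \<pi> t v / (2*\<gamma>)" "2*\<gamma>"] D g0 g1 by auto
    have "Dist P \<pi> t v \<le> 2*\<gamma>*(2*\<gamma>)^K" by (rule decay) (simp add: True)
    also have "\<dots> < 2*\<gamma> * (Dist P \<pi> t v / (2*\<gamma>))" by (rule mult_strict_left_mono[OF K]) (use g0 in simp)
    also have "\<dots> = Dist P \<pi> t v" using g0 by simp
    finally show False by simp
  qed
  then have "(\<Sum>t<T. Dist P \<pi> t v) \<le> 0" by (simp add: sum_nonpos)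
  then show ?thesis using True by simp
next
  case False
  let ?m = "mixing_time P \<pi> \<gamma>"
  have S: "(\<Sum>t<?m + K*?m. Dist P \<pi> t v) \<le> 2*?m + 2*\<gamma>*?m*(\<Sum>j<K. (2*\<gamma>)^j)" for K
  proof (induction K)
    case 0
    have "(\<Sum>t<?m. Dist P \<pi> t v) \<le> (\<Sum>t<?m. 2)" by (rule sum_mono) (rule Dist_le2[OF st sd])
    then show ?case by simp
  next
    case (Suc K)
    have "(\<Sum>t<?m + Suc K*?m. Dist P \<pi> t v) = (\<Sum>t<(?m + K*?m) + ?m. Dist P \<pi> t v)"
      by (simp add: add_ac)
    also have "\<dots> = (\<Sum>t<?m + K*?m. Dist P \<pi> t v) + (\<Sum>i<?m. Dist P \<pi> (?m + K*?m + i) v)"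
      by (rule sum_lessThan_add)
    also have "\<dots> \<le> (2*?m + 2*\<gamma>*?m*(\<Sum>j<K. (2*\<gamma>)^j)) + (\<Sum>i<?m. 2*\<gamma>*(2*\<gamma>)^K)"
      by (rule add_mono[OF Suc.IH sum_mono], rule decay) simp
    also have "\<dots> = 2*?m + 2*\<gamma>*?m*(\<Sum>j<Suc K. (2*\<gamma>)^j)" by (simp add: algebra_simps)
    finally show ?case .
  qed
  have geo: "(\<Sum>j<T. (2*\<gamma>)^j) \<le> 1 / (1 - 2*\<gamma>)"
  proof -
    have "(\<Sum>j<T. (2*\<gamma>)^j) = (1 - (2*\<gamma>)^T) / (1 - 2*\<gamma>)" using g1 sum_gp_strict[of "2*\<gamma>" T] by (simp only:) simp
    also have "\<dots> \<le> 1 / (1 - 2*\<gamma>)" using g0 g1 by (intro divide_right_mono) auto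
    finally show ?thesis .
  qed
  have "(\<Sum>t<T. Dist P \<pi> t v) \<le> (\<Sum>t<?m + T*?m. Dist P \<pi> t v)"
  proof (rule sum_mono2)
    have "T \<le> T * ?m" using False by simp
    then have "T \<le> ?m + T * ?m" by linarith
    then show "{..<T} \<subseteq> {..<?m + T*?m}" by auto
  qed (auto simp: Dist_nonneg)
  also have "\<dots> \<le> 2*?m + 2*\<gamma>*?m*(\<Sum>j<T. (2*\<gamma>)^j)" by (rule S)
  also have "\<dots> \<le> 2*?m + 2*\<gamma>*?m*(1 / (1 - 2*\<gamma>))"
    using geo g0 by (intro add_left_mono mult_left_mono) auto
  also have "\<dots> = 2 * real ?m * (1-\<gamma>) / (1 - 2*\<gamma>)" using g1 by (simp add: field_simps)
  finally show ?thesis .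
qed

end


lemma snd_router: "snd (router_state \<sigma> \<chi>0 t) = (\<lambda>v. \<Sum>s<t. chi \<sigma> \<chi>0 s v)"
proof (induction t)
  case 0 then show ?case by simp
next
  case (Suc t)
  then show ?case by (simp add: Let_def chi_def)
qed

lemma chi_0: "chi \<sigma> \<chi>0 0 = \<chi>0" by (simp add: chi_def)

lemma chi_Suc: "chi \<sigma> \<chi>0 (Suc t) u = (\<Sum>v\<in>UNIV. Zflow \<sigma> \<chi>0 t v u)"
proof -
  have "chi \<sigma> \<chi>0 (Suc t) u = (\<Sum>v\<in>UNIV. Icount \<sigma> v u (snd (router_state \<sigma> \<chi>0 t) v)
           (snd (router_state \<sigma> \<chi>0 t) v + fst (router_state \<sigma> \<chi>0 t) v))"
    by (simp add: chi_def Let_def)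
  also have "\<dots> = (\<Sum>v\<in>UNIV. Zflow \<sigma> \<chi>0 t v u)"
    unfolding snd_router Zflow_def by (simp add: chi_def)
  finally show ?thesis .
qed

lemma Icount_sum: fixes \<sigma> :: "'v::finite \<Rightarrow> nat \<Rightarrow> 'v" shows "(\<Sum>u\<in>UNIV. Icount \<sigma> v u a b) = b - a"
proof -
  have c: "Icount \<sigma> v u a b = (\<Sum>j\<in>{a..<b}. if \<sigma> v j = u then 1 else 0)" for u
  proof -
    have "{j. a \<le> j \<and> j < b \<and> \<sigma> v j = u} = {j\<in>{a..<b}. \<sigma> v j = u}" by auto
    then have "Icount \<sigma> v u a b = card {j\<in>{a..<b}. \<sigma> v j = u}" unfolding Icount_def by simp
    also have "\<dots> = (\<Sum>j\<in>{j\<in>{a..<b}. \<sigma> v j = u}. 1)" by simp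
    also have "\<dots> = (\<Sum>j\<in>{a..<b}. if \<sigma> v j = u then 1 else 0)"
      by (rule sum.inter_filter) simp
    finally show ?thesis .
  qed
  have "(\<Sum>u\<in>UNIV. Icount \<sigma> v u a b) = (\<Sum>j\<in>{a..<b}. \<Sum>u\<in>UNIV. if \<sigma> v j = u then 1 else 0)"
    unfolding c by (rule sum.swap)
  also have "\<dots> = (\<Sum>j\<in>{a..<b}. (1::nat))" by (intro sum.cong refl) (simp add: sum.delta sum.delta')
  finally show ?thesis by simp
qed

lemma Icount_zero:
  assumes "\<And>j. \<sigma> v j \<in> nbhd P v" "u \<notin> nbhd P v"
  shows "Icount \<sigma> v u a b = 0"
proof -
  have "{j. a \<le> j \<and> j < b \<and> \<sigma> v j = u} = {}" using assms by auto
  then show ?thesis unfolding Icount_def by simp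
qed

lemma Zflow_sum: "(\<Sum>u\<in>UNIV. Zflow \<sigma> \<chi>0 t v u) = chi \<sigma> \<chi>0 t v"
  unfolding Zflow_def Icount_sum by simp



theorem theorem3p1:
  fixes P :: "'v::finite \<Rightarrow> 'v \<Rightarrow> real" and \<pi> :: "'v \<Rightarrow> real"
    and \<sigma> :: "'v \<Rightarrow> nat \<Rightarrow> 'v" and \<chi>0 :: "'v \<Rightarrow> nat"
    and w :: 'v and T :: nat and \<gamma> :: real
  assumes "stochastic P" and "ergodic P" and "stationary_distribution P \<pi>"
    and "reversible P \<pi>"
    and "\<And>v j. \<sigma> v j \<in> nbhd P v"
    and "0 < \<gamma>" and "\<gamma> < 1/2"
  shows "ereal \<bar>real (chi \<sigma> \<chi>0 T w) - mu P \<chi>0 T w\<bar>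
    \<le> Psi P \<sigma> \<chi>0 * ereal (2 * (1 - \<gamma>) / (1 - 2 * \<gamma>) * real (mixing_time P \<pi> \<gamma>)
        * (\<pi> w / pi_min \<pi>) * real (max_degree P))"
proof -
  note st = assms(1) and erg = assms(2) and sd = assms(3) and rev = assms(4)
    and sig = assms(5) and g0 = assms(6) and g1 = assms(7)
  have irr: "irreducible_chain P" using erg unfolding ergodic_def by simp
  have Pnn: "P u v \<ge> 0" for u v using st unfolding stochastic_def by simp
  have Prow: "(\<Sum>v\<in>UNIV. P u v) = 1" for u using st unfolding stochastic_def by simp
  have pipos: "\<pi> v > 0" for v by (rule pi_pos[OF sd irr st])
  define pm where "pm = pi_min \<pi>"
  have pm_le: "pm \<le> \<pi> u" for u unfolding pm_def pi_min_def by (rule Min_le) auto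
  have "pm \<in> range \<pi>" unfolding pm_def pi_min_def by (rule Min_in) auto
  then have pm_pos: "pm > 0" using pipos by auto
  define \<Delta> where "\<Delta> = real (max_degree P)"
  have deg: "real (card (nbhd P u)) \<le> \<Delta>" for u
    unfolding \<Delta>_def max_degree_def of_nat_le_iff by (rule Max_ge) auto
  define \<tau> where "\<tau> = mixing_time P \<pi> \<gamma>"
  define c where "c = 2 * (1 - \<gamma>) / (1 - 2 * \<gamma>) * real \<tau> * (\<pi> w / pm) * \<Delta>"
  have c0: "c \<ge> 0" unfolding c_def \<Delta>_def using g0 g1 pm_pos pipos[of w] by simp

  define chiR where "chiR s u = real (chi \<sigma> \<chi>0 s u)" for s u
  define \<xi> where "\<xi> s v u = real (Zflow \<sigma> \<chi>0 s v u) - chiR s v * P v u" for s v u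
  define a where "a t u = \<bar>matpow P t u w - \<pi> w\<bar>" for t u
  define b where "b s v u = (if P v u > 0 then a (T - Suc s) u else 0)" for s v u

  have F1: "chiR (Suc s) u = (\<Sum>v\<in>UNIV. \<xi> s v u) + (\<Sum>v\<in>UNIV. chiR s v * P v u)" for s u
    unfolding chiR_def \<xi>_def chi_Suc by (simp add: sum_subtractf)
  have F2: "(\<Sum>u\<in>UNIV. \<xi> s v u) = 0" for s v
  proof -
    have "(\<Sum>u\<in>UNIV. real (Zflow \<sigma> \<chi>0 s v u)) = chiR s v"
      unfolding chiR_def of_nat_sum[symmetric] Zflow_sum by simp
    moreover have "(\<Sum>u\<in>UNIV. chiR s v * P v u) = chiR s v"
      by (simp add: sum_distrib_left[symmetric] Prow)
    ultimately show ?thesis unfolding \<xi>_def by (simp add: sum_subtractf)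
  qed
  have F3: "\<xi> s v u = 0" if "\<not> P v u > 0" for s v u
  proof -
    have "u \<notin> nbhd P v" using that unfolding nbhd_def by simp
    then have "Zflow \<sigma> \<chi>0 s v u = 0" unfolding Zflow_def by (rule Icount_zero[OF sig])
    moreover have "P v u = 0" using that Pnn[of v u] by simp
    ultimately show ?thesis unfolding \<xi>_def by simp
  qed

  define f where "f s = (\<Sum>u\<in>UNIV. chiR s u * matpow P (T - s) u w)" for s
  have fdiff: "f (Suc s) - f s = (\<Sum>v\<in>UNIV. \<Sum>u\<in>UNIV. \<xi> s v u * (matpow P (T - Suc s) u w - \<pi> w))"
    if "s < T" for s
  proof -
    define k where "k = T - Suc s"
    have Tk: "T - s = Suc k" using that unfolding k_def by simp
    have "f s = (\<Sum>x\<in>UNIV. chiR s x * (\<Sum>u\<in>UNIV. P x u * matpow P k u w))"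
      unfolding f_def Tk matpow_Suc_left by simp
    also have "\<dots> = (\<Sum>x\<in>UNIV. \<Sum>u\<in>UNIV. chiR s x * P x u * matpow P k u w)"
      by (simp add: sum_distrib_left mult.assoc)
    also have "\<dots> = (\<Sum>u\<in>UNIV. \<Sum>x\<in>UNIV. chiR s x * P x u * matpow P k u w)"
      by (rule sum.swap)
    also have "\<dots> = (\<Sum>u\<in>UNIV. (\<Sum>x\<in>UNIV. chiR s x * P x u) * matpow P k u w)"
      by (simp add: sum_distrib_right)
    finally have fs: "f s = \<dots>" .
    have fS: "f (Suc s) = (\<Sum>u\<in>UNIV. ((\<Sum>v\<in>UNIV. \<xi> s v u) + (\<Sum>v\<in>UNIV. chiR s v * P v u)) * matpow P k u w)"
      unfolding f_def k_def F1 by simp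
    have "f (Suc s) - f s = (\<Sum>u\<in>UNIV. (\<Sum>v\<in>UNIV. \<xi> s v u) * matpow P k u w)"
      unfolding fs fS by (simp add: distrib_right sum.distrib)
    also have "\<dots> = (\<Sum>u\<in>UNIV. \<Sum>v\<in>UNIV. \<xi> s v u * matpow P k u w)"
      by (simp add: sum_distrib_right)
    also have "\<dots> = (\<Sum>v\<in>UNIV. \<Sum>u\<in>UNIV. \<xi> s v u * matpow P k u w)"
      by (rule sum.swap)
    also have "\<dots> = (\<Sum>v\<in>UNIV. \<Sum>u\<in>UNIV. \<xi> s v u * (matpow P k u w - \<pi> w))"
    proof (rule sum.cong[OF refl])
      fix v
      have "(\<Sum>u\<in>UNIV. \<xi> s v u * (matpow P k u w - \<pi> w))
          = (\<Sum>u\<in>UNIV. \<xi> s v u * matpow P k u w) - (\<Sum>u\<in>UNIV. \<xi> s v u) * \<pi> w"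
        by (simp add: right_diff_distrib sum_subtractf sum_distrib_right)
      then show "(\<Sum>u\<in>UNIV. \<xi> s v u * matpow P k u w) = (\<Sum>u\<in>UNIV. \<xi> s v u * (matpow P k u w - \<pi> w))"
        using F2[of s v] by simp
    qed
    finally show ?thesis unfolding k_def .
  qed
  have fT: "f T = chiR T w"
  proof -
    have "f T = (\<Sum>u\<in>UNIV. if u = w then chiR T u else 0)" unfolding f_def
      by (intro sum.cong refl) simp
    then show ?thesis by simp
  qed
  have f0: "f 0 = mu P \<chi>0 T w" unfolding f_def mu_def chiR_def chi_0 by simp
  have main_eq: "chiR T w - mu P \<chi>0 T w
      = (\<Sum>s<T. \<Sum>v\<in>UNIV. \<Sum>u\<in>UNIV. \<xi> s v u * (matpow P (T - Suc s) u w - \<pi> w))"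
  proof -
    have "chiR T w - mu P \<chi>0 T w = (\<Sum>s<T. f (Suc s) - f s)"
      unfolding sum_lessThan_telescope fT f0 ..
    also have "\<dots> = (\<Sum>s<T. \<Sum>v\<in>UNIV. \<Sum>u\<in>UNIV. \<xi> s v u * (matpow P (T - Suc s) u w - \<pi> w))"
      by (rule sum.cong[OF refl]) (simp add: fdiff)
    finally show ?thesis .
  qed
  have term_eq: "\<bar>\<xi> s v u * (matpow P (T - Suc s) u w - \<pi> w)\<bar> = \<bar>\<xi> s v u\<bar> * b s v u" for s v u
    unfolding b_def a_def using F3[of v u s] by (auto simp: abs_mult)
  define R where "R = (\<Sum>s<T. \<Sum>v\<in>UNIV. \<Sum>u\<in>UNIV. \<bar>\<xi> s v u\<bar> * b s v u)"
  define B where "B = (\<Sum>s<T. \<Sum>v\<in>UNIV. \<Sum>u\<in>UNIV. b s v u)"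
  have LR: "\<bar>chiR T w - mu P \<chi>0 T w\<bar> \<le> R"
  proof -
    have "\<bar>chiR T w - mu P \<chi>0 T w\<bar> \<le> (\<Sum>s<T. \<bar>\<Sum>v\<in>UNIV. \<Sum>u\<in>UNIV. \<xi> s v u * (matpow P (T - Suc s) u w - \<pi> w)\<bar>)"
      unfolding main_eq by (rule sum_abs)
    also have "\<dots> \<le> (\<Sum>s<T. \<Sum>v\<in>UNIV. \<bar>\<Sum>u\<in>UNIV. \<xi> s v u * (matpow P (T - Suc s) u w - \<pi> w)\<bar>)"
      by (rule sum_mono, rule sum_abs)
    also have "\<dots> \<le> (\<Sum>s<T. \<Sum>v\<in>UNIV. \<Sum>u\<in>UNIV. \<bar>\<xi> s v u * (matpow P (T - Suc s) u w - \<pi> w)\<bar>)"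
      by (rule sum_mono, rule sum_mono, rule sum_abs)
    also have "\<dots> = R" unfolding R_def term_eq ..
    finally show ?thesis .
  qed
  have bnn: "b s v u \<ge> 0" for s v u unfolding b_def a_def by simp
  have Bnn: "B \<ge> 0" unfolding B_def by (simp add: sum_nonneg bnn)

  have sym_nb: "{v. P v u > 0} = nbhd P u" for u
  proof -
    have "P v u > 0 \<longleftrightarrow> P u v > 0" for v
    proof -
      have e: "\<pi> v * P v u = \<pi> u * P u v" using rev unfolding reversible_def by simp
      show ?thesis using e pipos[of u] pipos[of v] Pnn[of u v] Pnn[of v u]
        by (smt (verit) mult_pos_pos zero_less_mult_pos)
    qed
    then show ?thesis unfolding nbhd_def by auto
  qed
  have a_bound: "a t u \<le> (\<pi> w / pm) * \<bar>matpow P t w u - \<pi> u\<bar>" for t u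
  proof -
    have r: "\<pi> u * matpow P t u w = \<pi> w * matpow P t w u" by (rule reversible_pow[OF rev])
    have "matpow P t u w - \<pi> w = (\<pi> w / \<pi> u) * (matpow P t w u - \<pi> u)"
      using r pipos[of u] by (simp add: field_simps)
    then have "a t u = (\<pi> w / \<pi> u) * \<bar>matpow P t w u - \<pi> u\<bar>"
      unfolding a_def using pipos[of u] pipos[of w] by (simp add: abs_mult)
    also have "\<dots> \<le> (\<pi> w / pm) * \<bar>matpow P t w u - \<pi> u\<bar>"
      using pm_pos pm_le[of u] pipos[of w]
      by (intro mult_right_mono divide_left_mono) auto
    finally show ?thesis .
  qed
  define G where "G t = (\<Sum>v\<in>UNIV. \<Sum>u\<in>UNIV. if P v u > 0 then a t u else 0)" for t
  have G_bound: "G t \<le> \<Delta> * (\<pi> w / pm) * Dist P \<pi> t w" for t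
  proof -
    have "G t = (\<Sum>u\<in>UNIV. \<Sum>v\<in>UNIV. if P v u > 0 then a t u else 0)"
      unfolding G_def by (rule sum.swap)
    also have "\<dots> = (\<Sum>u\<in>UNIV. real (card (nbhd P u)) * a t u)"
    proof (rule sum.cong[OF refl])
      fix u
      have "(\<Sum>v\<in>UNIV. if P v u > 0 then a t u else 0) = (\<Sum>v\<in>{v. P v u > 0}. a t u)"
        by (simp add: sum.If_cases)
      also have "\<dots> = real (card (nbhd P u)) * a t u" using sym_nb[of u] by simp
      finally show "(\<Sum>v\<in>UNIV. if P v u > 0 then a t u else 0) = real (card (nbhd P u)) * a t u" .
    qed
    also have "\<dots> \<le> (\<Sum>u\<in>UNIV. \<Delta> * ((\<pi> w / pm) * \<bar>matpow P t w u - \<pi> u\<bar>))"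
    proof (rule sum_mono)
      fix u
      have an: "a t u \<ge> 0" unfolding a_def by simp
      have "real (card (nbhd P u)) * a t u \<le> \<Delta> * a t u" by (rule mult_right_mono[OF deg an])
      also have "\<dots> \<le> \<Delta> * ((\<pi> w / pm) * \<bar>matpow P t w u - \<pi> u\<bar>)"
        by (rule mult_left_mono[OF a_bound]) (simp add: \<Delta>_def)
      finally show "real (card (nbhd P u)) * a t u \<le> \<Delta> * ((\<pi> w / pm) * \<bar>matpow P t w u - \<pi> u\<bar>)" .
    qed
    also have "\<dots> = \<Delta> * (\<pi> w / pm) * Dist P \<pi> t w"
      unfolding Dist_def by (simp add: sum_distrib_left mult.assoc)
    finally show ?thesis .
  qed
  have BG: "B = (\<Sum>t<T. G t)"
  proof -
    have "B = (\<Sum>s<T. G (T - Suc s))" unfolding B_def G_def b_def ..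
    also have "\<dots> = (\<Sum>t<T. G t)" by (rule sum_reflect)
    finally show ?thesis .
  qed
  have Bc: "B \<le> c"
  proof -
    have "B \<le> (\<Sum>t<T. \<Delta> * (\<pi> w / pm) * Dist P \<pi> t w)" unfolding BG by (rule sum_mono, rule G_bound)
    also have "\<dots> = \<Delta> * (\<pi> w / pm) * (\<Sum>t<T. Dist P \<pi> t w)" by (simp add: sum_distrib_left)
    also have "\<dots> \<le> \<Delta> * (\<pi> w / pm) * (2 * real \<tau> * (1-\<gamma>) / (1 - 2*\<gamma>))"
      unfolding \<tau>_def
      by (rule mult_left_mono[OF sum_Dist_bound[OF st erg sd g0 g1]])
         (use pm_pos pipos[of w] in \<open>simp add: \<Delta>_def\<close>)
    also have "\<dots> = c" unfolding c_def by (simp add: field_simps)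
    finally show ?thesis .
  qed

  have xi_Psi: "ereal \<bar>\<xi> s v u\<bar> \<le> Psi P \<sigma> \<chi>0" if "P v u > 0" for s v u
    unfolding Psi_def \<xi>_def chiR_def
    by (rule SUP_upper2[of "(v, u, s)"]) (use that in \<open>auto simp: nbhd_def\<close>)
  have Psi_nn: "Psi P \<sigma> \<chi>0 \<ge> 0"
  proof -
    obtain v0 :: 'v where True by simp
    have "\<exists>u. P v0 u > 0"
    proof (rule ccontr)
      assume "\<not> (\<exists>u. P v0 u > 0)"
      then have "(\<Sum>u\<in>UNIV. P v0 u) \<le> 0" by (intro sum_nonpos) (simp add: not_less)
      then show False using Prow[of v0] by simp
    qed
    then obtain u0 where "P v0 u0 > 0" by blast
    then have "ereal \<bar>\<xi> 0 v0 u0\<bar> \<le> Psi P \<sigma> \<chi>0" by (rule xi_Psi)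
    then show ?thesis by (rule order_trans[rotated]) simp
  qed
  have lhs_eq: "\<bar>real (chi \<sigma> \<chi>0 T w) - mu P \<chi>0 T w\<bar> = \<bar>chiR T w - mu P \<chi>0 T w\<bar>"
    unfolding chiR_def ..
  show ?thesis
  proof (cases "Psi P \<sigma> \<chi>0")
    case (real p)
    have p0: "p \<ge> 0" using Psi_nn real by simp
    have "R \<le> (\<Sum>s<T. \<Sum>v\<in>UNIV. \<Sum>u\<in>UNIV. p * b s v u)"
      unfolding R_def
    proof (intro sum_mono)
      fix s v u
      show "\<bar>\<xi> s v u\<bar> * b s v u \<le> p * b s v u"
      proof (cases "P v u > 0")
        case True
        then have "\<bar>\<xi> s v u\<bar> \<le> p" using xi_Psi[OF True, of s] real by simp
        then show ?thesis by (rule mult_right_mono[OF _ bnn])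
      next
        case False then show ?thesis unfolding b_def by simp
      qed
    qed
    also have "\<dots> = p * B" unfolding B_def by (simp add: sum_distrib_left)
    also have "\<dots> \<le> p * c" by (rule mult_left_mono[OF Bc p0])
    finally have "\<bar>chiR T w - mu P \<chi>0 T w\<bar> \<le> p * c" using LR by simp
    then show ?thesis unfolding lhs_eq real c_def \<tau>_def \<Delta>_def pm_def by simp
  next
    case PInf
    show ?thesis
    proof (cases "c > 0")
      case True
      have e: "2 * (1 - \<gamma>) / (1 - 2 * \<gamma>) * real (mixing_time P \<pi> \<gamma>)
        * (\<pi> w / pi_min \<pi>) * real (max_degree P) = c"
        unfolding c_def \<tau>_def \<Delta>_def pm_def ..
      have "\<infinity> * ereal c = \<infinity>" using True by simp
      then show ?thesis unfolding PInf e by simp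
    next
      case False
      then have c00: "c = 0" using c0 by simp
      then have B0: "B = 0" using Bc Bnn by simp
      define K where "K = (\<Sum>s<T. \<Sum>v\<in>UNIV. \<Sum>u\<in>UNIV. \<bar>\<xi> s v u\<bar>)"
      have "R \<le> (\<Sum>s<T. \<Sum>v\<in>UNIV. \<Sum>u\<in>UNIV. K * b s v u)"
        unfolding R_def
      proof (intro sum_mono)
        fix s v u
        assume s: "s \<in> {..<T}"
        have "\<bar>\<xi> s v u\<bar> \<le> (\<Sum>u'\<in>UNIV. \<bar>\<xi> s v u'\<bar>)" by (rule member_le_sum) auto
        also have "\<dots> \<le> (\<Sum>v'\<in>UNIV. \<Sum>u'\<in>UNIV. \<bar>\<xi> s v' u'\<bar>)"
          by (rule member_le_sum) (auto intro: sum_nonneg)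
        also have "\<dots> \<le> K" unfolding K_def
          by (rule member_le_sum) (use s in \<open>auto intro!: sum_nonneg\<close>)
        finally show "\<bar>\<xi> s v u\<bar> * b s v u \<le> K * b s v u" by (rule mult_right_mono[OF _ bnn])
      qed
      also have "\<dots> = K * B" unfolding B_def by (simp add: sum_distrib_left)
      also have "\<dots> = 0" using B0 by simp
      finally have "\<bar>chiR T w - mu P \<chi>0 T w\<bar> \<le> 0" using LR by simp
      then have "\<bar>real (chi \<sigma> \<chi>0 T w) - mu P \<chi>0 T w\<bar> = 0" unfolding lhs_eq by simp
      moreover have "2 * (1 - \<gamma>) / (1 - 2 * \<gamma>) * real (mixing_time P \<pi> \<gamma>)
        * (\<pi> w / pi_min \<pi>) * real (max_degree P) = 0"
        using c00 unfolding c_def \<tau>_def \<Delta>_def pm_def .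
      ultimately show ?thesis unfolding PInf by simp
    qed
  next
    case MInf
    then show ?thesis using Psi_nn by simp
  qed
qed


end
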